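(* Let $n\ge 2$, $d\ge 1$, $\tau>0$, $\sigma>0$. Let $\mu^\star_1,\mu^\star_2\stackrel{\mathrm{i.i.d.}}{\sim}\mathcal N(0,\tau^2 I_d)$ and $\xi_1,\dots,\xi_n\stackrel{\mathrm{i.i.d.}}{\sim}\mathcal N(0,\sigma^2 I_d)$, independent, let $z^\star_1,\dots,z^\star_n\in\{1,2\}$ be fixed labels with both classes $S^\star_\ell=\{i:z^\star_i=\ell\}$ nonempty, and $x_i=\mu^\star_{z^\star_i}+\xi_i$. Let $\{C_1,C_2\}$ be a fixed partition of $[n]$ into two nonempty sets. Fix $i\in[n]$, let $\ell$ with $i\in S^\star_\ell$, $j$ with $i\in C_j$, and $\overline j$ the other cluster index. If $$0<R^\ell_j\le R^\ell_{\overline j}\le 1,$$ then $$\mathbb P\bigl(\Delta_H^2(x_i,C_j)\le\Delta_H^2(x_i,C_{\overline j})\bigr)\le\rho^{d/4},$$ where $$\rho=1-\left(\frac{\tau^2\Bigl(\frac{|C_j|}{|C_j|-1}(1-R^\ell_j)^2-\frac{|C_{\overline j}|}{|C_{\overline j}|+1}(1-R^\ell_{\overline j})^2\Bigr)}{\tau^2\Bigl(\frac{|C_j|}{|C_j|-1}(1-R^\ell_j)^2+\frac{|C_{\overline j}|}{|C_{\overline j}|+1}(1-R^\ell_{\overline j})^2\Bigr)+\sigma^2}\right)^2,$$ and $0\le\rho<1$.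
   Context: $R^\ell_k=|C_k\cap S^\star_\ell|/|C_k|$ (purity). Centroids $\widehat\mu_k=|C_k|^{-1}\sum_{m\in C_k}x_m$. The Hartigan weighted distance is $\Delta_H^2(x_i,C_k)=\frac{|C_k|}{|C_k|-1}\|x_i-\widehat\mu_k\|^2$ if $i\in C_k$ and $\Delta_H^2(x_i,C_k)=\frac{|C_k|}{|C_k|+1}\|x_i-\widehat\mu_k\|^2$ if $i\notin C_k$. Randomness is only over the centers and noise. *)

theory Defs
  imports "HOL-Probability.Probability"
begin

text \<open>Vectors in R^d are represented as functions nat => real, coordinates k < d.\<close>

definition sqdist :: "nat \<Rightarrow> (nat \<Rightarrow> real) \<Rightarrow> (nat \<Rightarrow> real) \<Rightarrow> real" where
  "sqdist d u v = (\<Sum>k<d. (u k - v k)^2)"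

definition centroid :: "(nat \<Rightarrow> nat \<Rightarrow> real) \<Rightarrow> nat set \<Rightarrow> (nat \<Rightarrow> real)" where
  "centroid x C = (\<lambda>k. (1 / real (card C)) * (\<Sum>m\<in>C. x m k))"

definition hartigan_dist :: "nat \<Rightarrow> (nat \<Rightarrow> nat \<Rightarrow> real) \<Rightarrow> nat \<Rightarrow> nat set \<Rightarrow> real" where
  "hartigan_dist d x i C =
     (if i \<in> C then real (card C) / (real (card C) - 1) * sqdist d (x i) (centroid x C)
      else real (card C) / (real (card C) + 1) * sqdist d (x i) (centroid x C))"

definition purity :: "nat set \<Rightarrow> nat set \<Rightarrow> real" where
  "purity C S = real (card (C \<inter> S)) / real (card C)"

end

theory Submission
  imports Defs
begin


lemma (in prob_space) lincomb_normal:
  fixes Y :: "'i \<Rightarrow> 'a \<Rightarrow> real"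
  assumes fin: "finite J" and ind: "indep_vars (\<lambda>_. borel) Y J"
    and spos: "\<And>j. j \<in> J \<Longrightarrow> 0 < s j"
    and distr: "\<And>j. j \<in> J \<Longrightarrow> distributed M lborel (Y j) (normal_density 0 (s j))"
    and V: "0 < (\<Sum>j\<in>J. (w j)\<^sup>2 * (s j)\<^sup>2)"
  shows "distributed M lborel (\<lambda>\<omega>. \<Sum>j\<in>J. w j * Y j \<omega>)
           (normal_density 0 (sqrt (\<Sum>j\<in>J. (w j)\<^sup>2 * (s j)\<^sup>2)))"
proof -
  define J' where "J' = {j\<in>J. w j \<noteq> 0}"
  have J'J: "J' \<subseteq> J" unfolding J'_def by auto
  have finJ': "finite J'" using fin J'J finite_subset by blast
  have ne: "J' \<noteq> {}"
  proof
    assume "J' = {}"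
    then have "\<forall>j\<in>J. w j = 0" unfolding J'_def by auto
    then have "(\<Sum>j\<in>J. (w j)\<^sup>2 * (s j)\<^sup>2) = 0" by simp
    with V show False by simp
  qed
  have e1: "\<And>\<omega>. (\<Sum>j\<in>J. w j * Y j \<omega>) = (\<Sum>j\<in>J'. w j * Y j \<omega>)"
    by (rule sum.mono_neutral_right[OF fin J'J]) (auto simp: J'_def)
  have e2: "(\<Sum>j\<in>J. (w j)\<^sup>2 * (s j)\<^sup>2) = (\<Sum>j\<in>J'. (\<bar>w j\<bar> * s j)\<^sup>2)"
    by (subst sum.mono_neutral_right[OF fin J'J]) (auto simp: J'_def power_mult_distrib)
  have ind': "indep_vars (\<lambda>_. borel) (\<lambda>j \<omega>. w j * Y j \<omega>) J'"
    by (rule indep_vars_compose2[OF indep_vars_subset[OF ind J'J]]) auto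
  have d': "distributed M lborel (\<lambda>\<omega>. w j * Y j \<omega>) (normal_density 0 (\<bar>w j\<bar> * s j))"
    if "j \<in> J'" for j
  proof -
    have "j \<in> J" "w j \<noteq> 0" using that unfolding J'_def by auto
    from normal_density_affine[OF distr[OF \<open>j\<in>J\<close>] spos[OF \<open>j\<in>J\<close>] \<open>w j \<noteq> 0\<close>, of 0]
    show ?thesis by simp
  qed
  have "distributed M lborel (\<lambda>\<omega>. \<Sum>j\<in>J'. w j * Y j \<omega>)
      (normal_density (\<Sum>j\<in>J'. 0) (sqrt (\<Sum>j\<in>J'. (\<bar>w j\<bar> * s j)\<^sup>2)))"
    by (rule sum_indep_normal[OF finJ' ne ind']) (use J'J spos d' in \<open>auto simp: J'_def\<close>)
  then show ?thesis by (simp add: e1 e2)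
qed

lemma (in prob_space) mgf_sq:
  assumes X: "distributed M lborel Y (normal_density 0 s)" and s: "0 < s"
    and t: "0 < 1 - 2 * t * s\<^sup>2"
  shows "(\<integral>\<^sup>+\<omega>. ennreal (exp (t * (Y \<omega>)\<^sup>2)) \<partial>M) = ennreal (1 / sqrt (1 - 2 * t * s\<^sup>2))"
proof -
  define q where "q = sqrt (1 - 2 * t * s\<^sup>2)"
  have q: "0 < q" using t by (simp add: q_def)
  define s' where "s' = s / q"
  have s': "0 < s'" using q s by (simp add: s'_def)
  have q2: "q\<^sup>2 = 1 - 2 * t * s\<^sup>2" using t by (simp add: q_def)
  have pt: "normal_density 0 s x * exp (t * x\<^sup>2) = (1 / q) * normal_density 0 s' x" for x
  proof -
    have a: "exp (- (x\<^sup>2) / (2 * s\<^sup>2)) * exp (t * x\<^sup>2) = exp (- (x\<^sup>2) / (2 * s'\<^sup>2))"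
    proof -
      have "- (x\<^sup>2) / (2 * s\<^sup>2) + t * x\<^sup>2 = - (x\<^sup>2) / (2 * s'\<^sup>2)"
      proof -
        have "- (x\<^sup>2) / (2 * s'\<^sup>2) = - (x\<^sup>2 * q\<^sup>2) / (2 * s\<^sup>2)"
          using q s unfolding s'_def by (simp add: power_divide field_simps)
        also have "\<dots> = - (x\<^sup>2 * (1 - 2 * t * s\<^sup>2)) / (2 * s\<^sup>2)" by (simp add: q2)
        also have "\<dots> = - (x\<^sup>2) / (2 * s\<^sup>2) + t * x\<^sup>2" using s
          by (simp add: field_simps)
        finally show ?thesis by simp
      qed
      then show ?thesis by (simp add: mult_exp_exp)
    qed
    have b: "sqrt (2 * pi * s'\<^sup>2) = sqrt (2 * pi * s\<^sup>2) / q"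
      using q s by (simp add: s'_def power_divide real_sqrt_divide field_simps real_sqrt_mult)
    show ?thesis unfolding normal_density_def using a b q s
      by (simp add: field_simps)
  qed
  have "(\<integral>\<^sup>+\<omega>. ennreal (exp (t * (Y \<omega>)\<^sup>2)) \<partial>M)
      = (\<integral>\<^sup>+x. ennreal (normal_density 0 s x) * ennreal (exp (t * x\<^sup>2)) \<partial>lborel)"
    by (rule distributed_nn_integral[OF X, symmetric]) simp
  also have "\<dots> = (\<integral>\<^sup>+x. ennreal (1 / q) * ennreal (normal_density 0 s' x) \<partial>lborel)"
  proof (intro nn_integral_cong)
    fix x
    have "ennreal (normal_density 0 s x) * ennreal (exp (t * x\<^sup>2))
        = ennreal (normal_density 0 s x * exp (t * x\<^sup>2))"
      by (rule ennreal_mult[symmetric]) auto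
    also have "\<dots> = ennreal (1 / q * normal_density 0 s' x)" by (simp only: pt)
    also have "\<dots> = ennreal (1 / q) * ennreal (normal_density 0 s' x)"
      by (rule ennreal_mult) (use q in auto)
    finally show "ennreal (normal_density 0 s x) * ennreal (exp (t * x\<^sup>2))
        = ennreal (1 / q) * ennreal (normal_density 0 s' x)" .
  qed
  also have "\<dots> = ennreal (1 / q) * (\<integral>\<^sup>+x. ennreal (normal_density 0 s' x) \<partial>lborel)"
    by (rule nn_integral_cmult) simp
  also have "(\<integral>\<^sup>+x. ennreal (normal_density 0 s' x) \<partial>lborel) = 1"
    using s' by (subst nn_integral_eq_integral) auto
  finally show ?thesis by (simp add: q_def)
qed



lemma (in prob_space) indep_blocks:
  fixes X :: "'i \<Rightarrow> 'a \<Rightarrow> real" and h :: "real \<Rightarrow> 'c::topological_space"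
  assumes ind: "indep_vars (\<lambda>_. borel) X I"
    and K: "\<And>k. k \<in> L \<Longrightarrow> K k \<subseteq> I" and dj: "disjoint_family_on K L"
    and fin: "\<And>k. k \<in> L \<Longrightarrow> finite (K k)"
    and h: "h \<in> borel_measurable borel"
  shows "indep_vars (\<lambda>_. borel) (\<lambda>k \<omega>. h (\<Sum>j\<in>K k. w j * X j \<omega>)) L"
proof -
  have r: "indep_vars (\<lambda>k. PiM (K k) (\<lambda>_. borel)) (\<lambda>k \<omega>. restrict (\<lambda>i. X i \<omega>) (K k)) L"
    by (rule indep_vars_restrict[OF ind K dj])
  have "indep_vars (\<lambda>_. borel) (\<lambda>k \<omega>. (\<lambda>f. h (\<Sum>j\<in>K k. w j * f j)) (restrict (\<lambda>i. X i \<omega>) (K k))) L"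
    by (rule indep_vars_compose2[OF r]) (use h in measurable)
  then show ?thesis
    by (rule indep_vars_cong[THEN iffD1, rotated 3]) auto
qed

lemma sumJ:
  fixes g :: "(nat \<times> nat) + (nat \<times> nat) \<Rightarrow> real"
  assumes "finite A" "finite B"
  shows "(\<Sum>j\<in>(\<lambda>l. Inl (l,k)) ` A \<union> (\<lambda>m. Inr (m,k)) ` B. g j)
     = (\<Sum>l\<in>A. g (Inl (l,k))) + (\<Sum>m\<in>B. g (Inr (m,k)))"
proof -
  have "(\<Sum>j\<in>(\<lambda>l. Inl (l,k)) ` A \<union> (\<lambda>m. Inr (m,k)) ` B. g j)
      = (\<Sum>j\<in>(\<lambda>l. Inl (l,k)) ` A. g j) + (\<Sum>j\<in>(\<lambda>m. Inr (m,k)) ` B. g j)"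
    by (rule sum.union_disjoint) (use assms in auto)
  also have "\<dots> = (\<Sum>l\<in>A. g (Inl (l,k))) + (\<Sum>m\<in>B. g (Inr (m,k)))"
    by (subst sum.reindex, simp add: inj_on_def)+ simp
  finally show ?thesis .
qed

lemma sq_sum:
  fixes C :: "nat set"
  assumes "finite N" "C \<subseteq> N" "C \<noteq> {}" "i \<in> N"
  shows "(\<Sum>m\<in>N. ((if m = i then 1 else 0) - (if m \<in> C then 1 / real (card C) else 0))\<^sup>2)
     = (if i \<in> C then 1 - 1 / real (card C) else 1 + 1 / real (card C))"
proof -
  have fC: "finite C" using assms finite_subset by blast
  have cpos: "0 < real (card C)" using fC assms by (simp add: card_gt_0_iff)
  have e: "((if m = i then 1 else 0) - (if m \<in> C then 1 / real (card C) else 0))\<^sup>2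
     = (if m = i then 1 else 0) - (if m = i \<and> m \<in> C then 2 / real (card C) else 0)
       + (if m \<in> C then 1 / (real (card C))\<^sup>2 else 0)" for m
    by (auto simp: power2_eq_square field_simps)
  have s1: "(\<Sum>m\<in>N. (if m = i then 1 else 0::real)) = 1" using assms by simp
  have s2: "(\<Sum>m\<in>N. (if m = i \<and> m \<in> C then 2 / real (card C) else 0))
       = (if i \<in> C then 2 / real (card C) else 0)"
  proof (cases "i \<in> C")
    case True
    then have "(\<Sum>m\<in>N. (if m = i \<and> m \<in> C then 2 / real (card C) else 0)) = (\<Sum>m\<in>N. (if m = i then 2 / real (card C) else 0))"
      by (intro sum.cong) auto
    then show ?thesis using assms True by simp
  next
    case False
    then show ?thesis by (intro trans[OF sum.neutral]) auto
  qed
  have s3: "(\<Sum>m\<in>N. (if m \<in> C then 1 / (real (card C))\<^sup>2 else 0)) = 1 / real (card C)"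
  proof -
    have "(\<Sum>m\<in>N. (if m \<in> C then 1 / (real (card C))\<^sup>2 else 0)) = (\<Sum>m\<in>C. 1 / (real (card C))\<^sup>2)"
      using assms by (simp add: sum.If_cases Int_absorb2 Int_commute)
    also have "\<dots> = 1 / real (card C)" using cpos by (simp add: power2_eq_square)
    finally show ?thesis .
  qed
  show ?thesis unfolding e sum.distrib sum_subtractf s1 s2 s3 by auto
qed

lemma diff_centroid:
  fixes F :: "nat \<Rightarrow> real" and G :: "nat \<Rightarrow> real" and z :: "nat \<Rightarrow> nat"
  assumes "finite N" "C \<subseteq> N" "C \<noteq> {}" "i \<in> N" "\<forall>m\<in>N. z m \<in> {1,2}" "l0 = z i"
  shows "(F l0 + G i) - 1 / real (card C) * (\<Sum>m\<in>C. F (z m) + G m)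
    = (\<Sum>l\<in>{1,2}. (if l = l0 then 1 - purity C {m\<in>N. z m = l0} else - (1 - purity C {m\<in>N. z m = l0})) * F l)
      + (\<Sum>m\<in>N. ((if m = i then 1 else 0) - (if m \<in> C then 1 / real (card C) else 0)) * G m)"
proof -
  define S where "S = {m\<in>N. z m = l0}"
  have fC: "finite C" using assms finite_subset by blast
  have cpos: "0 < real (card C)" using fC assms by (simp add: card_gt_0_iff)
  have l0: "l0 \<in> {1,2}" using assms by auto
  have CS: "C \<inter> S = {m\<in>C. z m = l0}" using assms unfolding S_def by auto
  have "(\<Sum>m\<in>C. F (z m)) = (\<Sum>m\<in>C. (if z m = l0 then F l0 else F (3 - l0)))"
  proof (rule sum.cong)
    fix m assume "m \<in> C"
    then have "z m \<in> {1,2}" using assms by auto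
    then show "F (z m) = (if z m = l0 then F l0 else F (3 - l0))" using l0 by auto
  qed simp
  also have "\<dots> = real (card (C \<inter> {m. z m = l0})) * F l0 + real (card (C \<inter> - {m. z m = l0})) * F (3 - l0)"
    using fC by (simp add: sum.If_cases)
  also have "card (C \<inter> - {m. z m = l0}) = card C - card (C \<inter> {m. z m = l0})"
  proof -
    have "C \<inter> - {m. z m = l0} = C - (C \<inter> {m. z m = l0})" by auto
    then show ?thesis using fC by (simp add: card_Diff_subset)
  qed
  also have "C \<inter> {m. z m = l0} = C \<inter> S" using assms unfolding S_def by auto
  finally have FF: "(\<Sum>m\<in>C. F (z m)) = real (card (C \<inter> S)) * F l0 + real (card C - card (C \<inter> S)) * F (3 - l0)" .
  have le: "card (C \<inter> S) \<le> card C" using fC by (simp add: card_mono)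
  have p: "purity C S = real (card (C \<inter> S)) / real (card C)" unfolding purity_def ..
  have GG: "1 / real (card C) * (\<Sum>m\<in>C. G m) = (\<Sum>m\<in>N. (if m \<in> C then 1 / real (card C) else 0) * G m)"
  proof -
    have "(\<Sum>m\<in>N. (if m \<in> C then 1 / real (card C) else 0) * G m) = (\<Sum>m\<in>N. (if m \<in> C then 1 / real (card C) * G m else 0))"
      by (rule sum.cong) auto
    also have "\<dots> = (\<Sum>m\<in>C. 1 / real (card C) * G m)"
      using assms by (simp add: sum.If_cases Int_absorb2 Int_commute)
    finally show ?thesis by (simp add: sum_distrib_left)
  qed
  have Gi: "G i = (\<Sum>m\<in>N. (if m = i then 1 else 0) * G m)"
  proof -
    have "(\<Sum>m\<in>N. (if m = i then 1 else 0) * G m) = (\<Sum>m\<in>N. (if m = i then G m else 0))"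
      by (rule sum.cong) auto
    then show ?thesis using assms by simp
  qed
  have L: "(\<Sum>l\<in>{1,2}. (if l = l0 then 1 - purity C S else - (1 - purity C S)) * F l)
      = (1 - purity C S) * F l0 - (1 - purity C S) * F (3 - l0)"
    using l0 by (auto simp: algebra_simps)
  show ?thesis
    unfolding S_def[symmetric] L
    unfolding sum.distrib sum_subtractf left_diff_distrib GG[symmetric] Gi[symmetric] FF p
    using cpos le by (simp add: field_simps of_nat_diff)
qed



lemma amgm_aux:
  fixes p q lam :: real
  assumes "0 < lam"
  shows "p * q \<le> lam / 2 * p\<^sup>2 + 1 / (2 * lam) * q\<^sup>2"
proof -
  have "0 \<le> (lam * p - q)\<^sup>2 / (2 * lam)" using assms by simp
  also have "(lam * p - q)\<^sup>2 / (2 * lam) = lam / 2 * p\<^sup>2 + 1 / (2 * lam) * q\<^sup>2 - p * q"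
    using assms by (simp add: power2_eq_square field_simps)
  finally show ?thesis by simp
qed

theorem theorem3p9:
  fixes n d :: nat and \<tau> \<sigma> :: real
    and M :: "'w measure"
    and X :: "(nat \<times> nat) + (nat \<times> nat) \<Rightarrow> 'w \<Rightarrow> real"
    and z :: "nat \<Rightarrow> nat" and C :: "nat \<Rightarrow> nat set"
    and i j l0 :: nat
  assumes "n \<ge> 2" and "d \<ge> 1" and "\<tau> > 0" and "\<sigma> > 0"
    and "prob_space M"
    \<comment> \<open>X (Inl (l,k)) = k-th coordinate of the center mu*_l; X (Inr (m,k)) = k-th coordinate of xi_m\<close>
    and "prob_space.indep_vars M (\<lambda>_. borel) X
           (Inl ` ({1,2} \<times> {..<d}) \<union> Inr ` ({1..n} \<times> {..<d}))"
    and "\<And>l k. l \<in> {1,2} \<Longrightarrow> k < d \<Longrightarrow>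
           distributed M lborel (X (Inl (l,k))) (normal_density 0 \<tau>)"
    and "\<And>m k. m \<in> {1..n} \<Longrightarrow> k < d \<Longrightarrow>
           distributed M lborel (X (Inr (m,k))) (normal_density 0 \<sigma>)"
    and "\<forall>m\<in>{1..n}. z m \<in> {1,2}"
    and "{m\<in>{1..n}. z m = 1} \<noteq> {}" and "{m\<in>{1..n}. z m = 2} \<noteq> {}"
    and "C 1 \<union> C 2 = {1..n}" and "C 1 \<inter> C 2 = {}"
    and "C 1 \<noteq> {}" and "C 2 \<noteq> {}"
    and "i \<in> {1..n}" and "l0 = z i"
    and "j \<in> {1,2}" and "i \<in> C j"
    and "0 < purity (C j) {m\<in>{1..n}. z m = l0}"
    and "purity (C j) {m\<in>{1..n}. z m = l0} \<le> purity (C (3 - j)) {m\<in>{1..n}. z m = l0}"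
    and "purity (C (3 - j)) {m\<in>{1..n}. z m = l0} \<le> 1"
  shows
   "let S = {m\<in>{1..n}. z m = l0};
        jb = 3 - j;
        Rj = purity (C j) S; Rjb = purity (C jb) S;
        a = real (card (C j)) / (real (card (C j)) - 1) * (1 - Rj)^2;
        b = real (card (C jb)) / (real (card (C jb)) + 1) * (1 - Rjb)^2;
        \<rho> = 1 - ((\<tau>^2 * (a - b)) / (\<tau>^2 * (a + b) + \<sigma>^2))^2;
        x = (\<lambda>\<omega> m k. X (Inl (z m, k)) \<omega> + X (Inr (m, k)) \<omega>)
    in measure M {\<omega> \<in> space M. hartigan_dist d (x \<omega>) i (C j) \<le> hartigan_dist d (x \<omega>) i (C jb)}
         \<le> \<rho> powr (real d / 4)
       \<and> 0 \<le> \<rho> \<and> \<rho> < 1"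
proof -
  interpret prob_space M by fact
  note ind = assms(6)
  define S where "S = {m\<in>{1..n}. z m = l0}"
  define jb where "jb = 3 - j"
  define Rj where "Rj = purity (C j) S"
  define Rjb where "Rjb = purity (C jb) S"
  define a where "a = real (card (C j)) / (real (card (C j)) - 1) * (1 - Rj)^2"
  define b where "b = real (card (C jb)) / (real (card (C jb)) + 1) * (1 - Rjb)^2"
  define \<rho> where "\<rho> = 1 - ((\<tau>^2 * (a - b)) / (\<tau>^2 * (a + b) + \<sigma>^2))^2"
  define x where "x = (\<lambda>\<omega> m k. X (Inl (z m, k)) \<omega> + X (Inr (m, k)) \<omega>)"
  define c where "c = card (C j)"
  define c' where "c' = card (C jb)"
  define \<alpha> where "\<alpha> = 1 - Rj"
  define \<beta> where "\<beta> = 1 - Rjb"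
  have l0: "l0 \<in> {1,2}" using assms by auto
  have jb12: "jb \<in> {1,2}" "jb \<noteq> j" using assms(18) unfolding jb_def by auto
  have CjCb: "C j \<inter> C jb = {}" "C j \<union> C jb = {1..n}"
    using assms(12,13) assms(18) unfolding jb_def by auto
  have fCj: "finite (C j)" and fCb: "finite (C jb)" using CjCb by (metis finite_Un finite_atLeastAtMost)+
  have neCj: "C j \<noteq> {}" and neCb: "C jb \<noteq> {}" using assms(14,15) assms(18) jb12 by auto
  have iCj: "i \<in> C j" and iCb: "i \<notin> C jb" using assms(19) CjCb by auto
  have CjN: "C j \<subseteq> {1..n}" and CbN: "C jb \<subseteq> {1..n}" using CjCb by auto
  have Rj_pos: "0 < Rj" and Rj_le: "Rj \<le> Rjb" and Rjb_le: "Rjb \<le> 1"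
    using assms(20,21,22) unfolding Rj_def Rjb_def S_def jb_def by auto
  have pur1: "C' \<subseteq> S" if "purity C' S \<ge> 1" "finite C'" "C' \<noteq> {}" for C'
  proof -
    have "card C' > 0" using that by (simp add: card_gt_0_iff)
    then have "card (C' \<inter> S) \<ge> card C'" using that unfolding purity_def by (simp add: field_simps)
    moreover have "card (C' \<inter> S) \<le> card C'" using that by (simp add: card_mono)
    ultimately have "card (C' \<inter> S) = card C'" by simp
    then have "C' \<inter> S = C'" using that by (metis Int_lower1 card_subset_eq)
    then show ?thesis by auto
  qed
  have Rj_lt: "Rj < 1"
  proof (rule ccontr)
    assume "\<not> Rj < 1"
    then have "C j \<subseteq> S" "C jb \<subseteq> S" using pur1 fCj fCb neCj neCb Rj_le Rjb_le
      unfolding Rj_def Rjb_def by (auto simp del: purity_def)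
    then have "{1..n} \<subseteq> S" using CjCb by auto
    moreover obtain m where "m \<in> {1..n}" "z m = 3 - l0" using assms(10,11) l0 by auto
    ultimately show False using l0 unfolding S_def by auto
  qed
  have c2: "c \<ge> 2"
  proof (rule ccontr)
    assume "\<not> c \<ge> 2"
    then have "c = 1" using fCj neCj unfolding c_def by (metis One_nat_def card_0_eq less_2_cases not_le)
    then have "C j = {i}" using iCj unfolding c_def by (metis card_1_singletonE singletonD)
    then have "Rj = 1" unfolding Rj_def purity_def S_def using assms(16,17) by simp
    then show False using Rj_lt by simp
  qed
  have c'1: "c' \<ge> 1" using fCb neCb unfolding c'_def by (simp add: Suc_leI card_gt_0_iff)
  have \<alpha>pos: "0 < \<alpha>" and \<beta>nn: "0 \<le> \<beta>" and \<beta>\<alpha>: "\<beta> \<le> \<alpha>"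
    using Rj_lt Rjb_le Rj_le unfolding \<alpha>_def \<beta>_def by auto
  define A where "A = real c / (real c - 1)"
  define B where "B = real c' / (real c' + 1)"
  have A1: "A > 1" using c2 unfolding A_def by (simp add: field_simps)
  have B1: "B < 1" "B > 0" using c'1 unfolding B_def by (simp_all add: field_simps)
  have a_eq: "a = A * \<alpha>\<^sup>2" unfolding a_def A_def c_def \<alpha>_def ..
  have b_eq: "b = B * \<beta>\<^sup>2" unfolding b_def B_def c'_def \<beta>_def ..
  have b0: "0 \<le> b" using B1 unfolding b_eq by simp
  have ab: "b < a"
  proof -
    have "b \<le> \<beta>\<^sup>2" unfolding b_eq using B1 by (simp add: mult_left_le_one_le)
    also have "\<dots> \<le> \<alpha>\<^sup>2" using \<beta>nn \<beta>\<alpha> by (simp add: power_mono)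
    also have "\<dots> < A * \<alpha>\<^sup>2" using A1 \<alpha>pos by simp
    finally show ?thesis unfolding a_eq .
  qed
  define P where "P = 2 * \<tau>\<^sup>2 * a + \<sigma>\<^sup>2"
  define R where "R = 2 * \<tau>\<^sup>2 * b + \<sigma>\<^sup>2"
  have R0: "0 < R" using b0 assms(4) unfolding R_def by (simp add: add_nonneg_pos)
  have RP: "R < P" using ab assms(3) unfolding P_def R_def by simp
  have tq: "(\<tau>^2 * (a - b)) / (\<tau>^2 * (a + b) + \<sigma>^2) = (P - R) / (P + R)"
  proof -
    have "P - R = 2 * (\<tau>^2 * (a - b))" "P + R = 2 * (\<tau>^2 * (a + b) + \<sigma>^2)"
      unfolding P_def R_def by (simp_all add: algebra_simps)
    then show ?thesis by (simp only: mult_divide_mult_cancel_left_if) simp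
  qed
  have rho_eq: "\<rho> = 4 * P * R / (P + R)\<^sup>2"
  proof -
    have ne: "(P + R)\<^sup>2 \<noteq> 0" using R0 RP by simp
    have h: "(P + R)\<^sup>2 - (P - R)\<^sup>2 = 4 * P * R" by (simp add: power2_eq_square algebra_simps)
    have "1 - ((P - R) / (P + R))\<^sup>2 = ((P + R)\<^sup>2 - (P - R)\<^sup>2) / (P + R)\<^sup>2"
      using ne by (simp only: power_divide) (simp add: diff_divide_distrib del: divide_diff_eq_iff)
    then show ?thesis unfolding \<rho>_def tq h .
  qed
  have rho_pos: "0 < \<rho>" unfolding rho_eq using R0 RP by simp
  have rho_lt: "\<rho> < 1"
  proof -
    have "0 < (P - R) / (P + R)" using R0 RP by simp
    then show ?thesis unfolding \<rho>_def tq using R0 RP by simp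
  qed
  have main: "measure M {\<omega> \<in> space M. hartigan_dist d (x \<omega>) i (C j) \<le> hartigan_dist d (x \<omega>) i (C jb)}
      \<le> \<rho> powr (real d / 4)"
  proof -
    define I where "I = Inl ` ({1::nat,2} \<times> {..<d}) \<union> Inr ` ({1..n} \<times> {..<d})"
    define J where "J = (\<lambda>k::nat. (\<lambda>l. Inl (l,k)) ` {1::nat,2} \<union> (\<lambda>m. Inr (m,k)) ` {1..n})"
    define sd where "sd = case_sum (\<lambda>_::nat\<times>nat. \<tau>) (\<lambda>_::nat\<times>nat. \<sigma>)"
    define wu where "wu = case_sum (\<lambda>(l::nat,k::nat). if l = l0 then \<alpha> else - \<alpha>)
        (\<lambda>(m,k::nat). (if m = i then 1 else 0) - (if m \<in> C j then 1 / real (card (C j)) else 0))"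
    define wv where "wv = case_sum (\<lambda>(l::nat,k::nat). if l = l0 then \<beta> else - \<beta>)
        (\<lambda>(m,k::nat). (if m = i then 1 else 0) - (if m \<in> C jb then 1 / real (card (C jb)) else 0))"
    define u where "u = (\<lambda>k \<omega>. \<Sum>q\<in>J k. wu q * X q \<omega>)"
    define v where "v = (\<lambda>k \<omega>. \<Sum>q\<in>J k. wv q * X q \<omega>)"
    define Vu where "Vu = 2 * \<alpha>\<^sup>2 * \<tau>\<^sup>2 + \<sigma>\<^sup>2 * (1 - 1 / real c)"
    define Vv where "Vv = 2 * \<beta>\<^sup>2 * \<tau>\<^sup>2 + \<sigma>\<^sup>2 * (1 + 1 / real c')"
    have finJ: "finite (J k)" for k unfolding J_def by simp
    have JI: "J k \<subseteq> I" if "k < d" for k unfolding J_def I_def using that by auto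
    have dj: "disjoint_family_on J {..<d}" unfolding J_def disjoint_family_on_def by auto
    have sJ: "(\<Sum>q\<in>J k. g q) = (\<Sum>l\<in>{1,2}. g (Inl (l,k))) + (\<Sum>m\<in>{1..n}. g (Inr (m,k)))" for g :: "_ \<Rightarrow> real" and k
      unfolding J_def by (rule sumJ) auto
    have u_eq: "x \<omega> i k - centroid (x \<omega>) (C j) k = u k \<omega>" for \<omega> k
    proof -
      have "x \<omega> i k - centroid (x \<omega>) (C j) k
          = (X (Inl (l0,k)) \<omega> + X (Inr (i,k)) \<omega>) - 1 / real (card (C j)) *
             (\<Sum>m\<in>C j. X (Inl (z m,k)) \<omega> + X (Inr (m,k)) \<omega>)"
        unfolding x_def centroid_def using assms(17) by simp
      also have "\<dots> = (\<Sum>l\<in>{1,2}. (if l = l0 then 1 - purity (C j) {m\<in>{1..n}. z m = l0}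
             else - (1 - purity (C j) {m\<in>{1..n}. z m = l0})) * X (Inl (l,k)) \<omega>)
          + (\<Sum>m\<in>{1..n}. ((if m = i then 1 else 0) - (if m \<in> C j then 1 / real (card (C j)) else 0)) * X (Inr (m,k)) \<omega>)"
        by (rule diff_centroid[where F="\<lambda>l. X (Inl (l,k)) \<omega>" and G="\<lambda>m. X (Inr (m,k)) \<omega>"])
           (use CjN neCj assms(16,9,17) in auto)
      also have "\<dots> = u k \<omega>"
        unfolding u_def sJ wu_def \<alpha>_def Rj_def S_def by simp
      finally show ?thesis .
    qed
    have v_eq: "x \<omega> i k - centroid (x \<omega>) (C jb) k = v k \<omega>" for \<omega> k
    proof -
      have "x \<omega> i k - centroid (x \<omega>) (C jb) k
          = (X (Inl (l0,k)) \<omega> + X (Inr (i,k)) \<omega>) - 1 / real (card (C jb)) *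
             (\<Sum>m\<in>C jb. X (Inl (z m,k)) \<omega> + X (Inr (m,k)) \<omega>)"
        unfolding x_def centroid_def using assms(17) by simp
      also have "\<dots> = (\<Sum>l\<in>{1,2}. (if l = l0 then 1 - purity (C jb) {m\<in>{1..n}. z m = l0}
             else - (1 - purity (C jb) {m\<in>{1..n}. z m = l0})) * X (Inl (l,k)) \<omega>)
          + (\<Sum>m\<in>{1..n}. ((if m = i then 1 else 0) - (if m \<in> C jb then 1 / real (card (C jb)) else 0)) * X (Inr (m,k)) \<omega>)"
        by (rule diff_centroid[where F="\<lambda>l. X (Inl (l,k)) \<omega>" and G="\<lambda>m. X (Inr (m,k)) \<omega>"])
           (use CbN neCb assms(16,9,17) in auto)
      also have "\<dots> = v k \<omega>"
        unfolding v_def sJ wv_def \<beta>_def Rjb_def S_def by simp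
      finally show ?thesis .
    qed
    have hj: "hartigan_dist d (x \<omega>) i (C j) = A * (\<Sum>k<d. (u k \<omega>)\<^sup>2)" for \<omega>
      unfolding hartigan_dist_def sqdist_def A_def c_def using iCj u_eq by simp
    have hb: "hartigan_dist d (x \<omega>) i (C jb) = B * (\<Sum>k<d. (v k \<omega>)\<^sup>2)" for \<omega>
      unfolding hartigan_dist_def sqdist_def B_def c'_def using iCb v_eq by simp
    have Vu_eq: "(\<Sum>q\<in>J k. (wu q)\<^sup>2 * (sd q)\<^sup>2) = Vu" for k
    proof -
      have "(\<Sum>q\<in>J k. (wu q)\<^sup>2 * (sd q)\<^sup>2) = 2 * \<alpha>\<^sup>2 * \<tau>\<^sup>2 +
          \<sigma>\<^sup>2 * (\<Sum>m\<in>{1..n}. ((if m = i then 1 else 0) - (if m \<in> C j then 1 / real (card (C j)) else 0))\<^sup>2)"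
        unfolding sJ wu_def sd_def by (simp add: sum_distrib_left mult.commute)
      also have "\<dots> = Vu" unfolding Vu_def c_def
        by (subst sq_sum) (use CjN neCj assms(16) iCj in auto)
      finally show ?thesis .
    qed
    have Vv_eq: "(\<Sum>q\<in>J k. (wv q)\<^sup>2 * (sd q)\<^sup>2) = Vv" for k
    proof -
      have "(\<Sum>q\<in>J k. (wv q)\<^sup>2 * (sd q)\<^sup>2) = 2 * \<beta>\<^sup>2 * \<tau>\<^sup>2 +
          \<sigma>\<^sup>2 * (\<Sum>m\<in>{1..n}. ((if m = i then 1 else 0) - (if m \<in> C jb then 1 / real (card (C jb)) else 0))\<^sup>2)"
        unfolding sJ wv_def sd_def by (simp add: sum_distrib_left mult.commute)
      also have "\<dots> = Vv" unfolding Vv_def c'_def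
        by (subst sq_sum) (use CbN neCb assms(16) iCb in auto)
      finally show ?thesis .
    qed
    have AVu: "A * Vu = P" unfolding A_def Vu_def P_def a_eq A_def using c2
      by (simp add: field_simps)
    have BVv: "B * Vv = R"
    proof -
      have "real c' > 0" using c'1 by simp
      moreover have "real c' + real c' * real c' > 0" using \<open>real c' > 0\<close> by (simp add: add_pos_pos)
      ultimately have h: "B * (1 + 1 / real c') = 1" unfolding B_def by (simp add: field_simps)
      have "B * Vv = 2 * \<tau>\<^sup>2 * (B * \<beta>\<^sup>2) + \<sigma>\<^sup>2 * (B * (1 + 1 / real c'))"
        unfolding Vv_def by (simp add: algebra_simps)
      then show ?thesis unfolding h R_def b_eq by simp
    qed
    have Vu0: "0 < Vu"
    proof -
      have "1 / real c < 1" using c2 by simp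
      then show ?thesis using assms(4) unfolding Vu_def by (intro add_nonneg_pos) auto
    qed
    have Vv0: "0 < Vv"
    proof -
      have "0 < 1 + 1 / real c'" by (simp add: add_pos_nonneg)
      then show ?thesis using assms(4) unfolding Vv_def by (intro add_nonneg_pos) auto
    qed
    have Xd: "distributed M lborel (X q) (normal_density 0 (sd q))" "0 < sd q" if "q \<in> J k" "k < d" for q k
      using that assms(7,8,3,4) unfolding J_def sd_def by auto
    have ud: "distributed M lborel (u k) (normal_density 0 (sqrt Vu))" if "k < d" for k
      unfolding u_def Vu_eq[of k, symmetric]
      by (rule lincomb_normal[OF finJ indep_vars_subset[OF ind]])
         (use that Xd JI Vu0 Vu_eq in \<open>auto simp: I_def\<close>)
    have vd: "distributed M lborel (v k) (normal_density 0 (sqrt Vv))" if "k < d" for k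
      unfolding v_def Vv_eq[of k, symmetric]
      by (rule lincomb_normal[OF finJ indep_vars_subset[OF ind]])
         (use that Xd JI Vv0 Vv_eq in \<open>auto simp: I_def\<close>)
    have P0: "0 < P" using R0 RP by simp
    define s where "s = (P - R) / (8 * P * R)"
    have s0: "0 < s" using R0 RP unfolding s_def by simp
    have sP: "1 + 4 * s * P = (P + R) / (2 * R)" unfolding s_def using P0 R0 by (simp add: field_simps)
    have sR: "1 - 4 * s * R = (P + R) / (2 * P)" unfolding s_def using P0 R0 by (simp add: field_simps)
    have sP0: "0 < 1 + 4 * s * P" unfolding sP using P0 R0 by simp
    have sR0: "0 < 1 - 4 * s * R" unfolding sR using P0 R0 by simp
    define e1 where "e1 = 1 / sqrt (1 + 4 * s * P)"
    define e2 where "e2 = 1 / sqrt (1 - 4 * s * R)"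
    have e1p: "0 < e1" unfolding e1_def using sP0 by simp
    have e2p: "0 < e2" unfolding e2_def using sR0 by simp
    define tu where "tu = - 2 * s * A"
    define tv where "tv = 2 * s * B"
    have mgf_u: "(\<integral>\<^sup>+\<omega>. ennreal (exp (tu * (u k \<omega>)\<^sup>2)) \<partial>M) = ennreal e1" if "k < d" for k
    proof -
      have "1 - 2 * tu * (sqrt Vu)\<^sup>2 = 1 + 4 * s * P"
        using Vu0 AVu unfolding tu_def by (simp add: algebra_simps)
      note eq = this
      have "(\<integral>\<^sup>+\<omega>. ennreal (exp (tu * (u k \<omega>)\<^sup>2)) \<partial>M) = ennreal (1 / sqrt (1 - 2 * tu * (sqrt Vu)\<^sup>2))"
        by (rule mgf_sq[OF ud[OF that]]) (use Vu0 in simp, simp only: eq sP0)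
      then show ?thesis unfolding eq e1_def .
    qed
    have mgf_v: "(\<integral>\<^sup>+\<omega>. ennreal (exp (tv * (v k \<omega>)\<^sup>2)) \<partial>M) = ennreal e2" if "k < d" for k
    proof -
      have "1 - 2 * tv * (sqrt Vv)\<^sup>2 = 1 - 4 * s * R"
        using Vv0 BVv unfolding tv_def by (simp add: algebra_simps)
      note eq = this
      have "(\<integral>\<^sup>+\<omega>. ennreal (exp (tv * (v k \<omega>)\<^sup>2)) \<partial>M) = ennreal (1 / sqrt (1 - 2 * tv * (sqrt Vv)\<^sup>2))"
        by (rule mgf_sq[OF vd[OF that]]) (use Vv0 in simp, simp only: eq sR0)
      then show ?thesis unfolding eq e2_def .
    qed
    have indu: "indep_vars (\<lambda>_. borel) (\<lambda>k \<omega>. ennreal (exp (tu * (u k \<omega>)\<^sup>2))) {..<d}"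
      unfolding u_def
      by (rule indep_blocks[OF ind[folded I_def] _ dj, where h="\<lambda>r. ennreal (exp (tu * r\<^sup>2))"])
         (use JI finJ in auto)
    have indv: "indep_vars (\<lambda>_. borel) (\<lambda>k \<omega>. ennreal (exp (tv * (v k \<omega>)\<^sup>2))) {..<d}"
      unfolding v_def
      by (rule indep_blocks[OF ind[folded I_def] _ dj, where h="\<lambda>r. ennreal (exp (tv * r\<^sup>2))"])
         (use JI finJ in auto)
    have Eu: "(\<integral>\<^sup>+\<omega>. (\<Prod>k<d. ennreal (exp (tu * (u k \<omega>)\<^sup>2))) \<partial>M) = ennreal (e1 ^ d)"
      by (subst indep_vars_nn_integral[OF _ indu]) (simp_all add: mgf_u ennreal_power e1p less_imp_le)
    have Evv: "(\<integral>\<^sup>+\<omega>. (\<Prod>k<d. ennreal (exp (tv * (v k \<omega>)\<^sup>2))) \<partial>M) = ennreal (e2 ^ d)"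
      by (subst indep_vars_nn_integral[OF _ indv]) (simp_all add: mgf_v ennreal_power e2p less_imp_le)
    have meas_u: "u k \<in> borel_measurable M" if "k < d" for k
      using distributed_measurable[OF ud[OF that]] by simp
    have meas_v: "v k \<in> borel_measurable M" if "k < d" for k
      using distributed_measurable[OF vd[OF that]] by simp
    have mU: "(\<lambda>\<omega>. \<Sum>k<d. (u k \<omega>)\<^sup>2) \<in> borel_measurable M"
    proof (rule borel_measurable_sum)
      fix k assume "k \<in> {..<d}"
      then have [measurable]: "u k \<in> borel_measurable M" using meas_u by auto
      show "(\<lambda>\<omega>. (u k \<omega>)\<^sup>2) \<in> borel_measurable M" by measurable
    qed
    have mV: "(\<lambda>\<omega>. \<Sum>k<d. (v k \<omega>)\<^sup>2) \<in> borel_measurable M"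
    proof (rule borel_measurable_sum)
      fix k assume "k \<in> {..<d}"
      then have [measurable]: "v k \<in> borel_measurable M" using meas_v by auto
      show "(\<lambda>\<omega>. (v k \<omega>)\<^sup>2) \<in> borel_measurable M" by measurable
    qed
    have mPu: "(\<lambda>\<omega>. \<Prod>k<d. ennreal (exp (tu * (u k \<omega>)\<^sup>2))) \<in> borel_measurable M"
    proof (rule borel_measurable_prod_ennreal)
      fix k assume "k \<in> {..<d}"
      then have [measurable]: "u k \<in> borel_measurable M" using meas_u by auto
      show "(\<lambda>\<omega>. ennreal (exp (tu * (u k \<omega>)\<^sup>2))) \<in> borel_measurable M" by measurable
    qed
    have mPv: "(\<lambda>\<omega>. \<Prod>k<d. ennreal (exp (tv * (v k \<omega>)\<^sup>2))) \<in> borel_measurable M"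
    proof (rule borel_measurable_prod_ennreal)
      fix k assume "k \<in> {..<d}"
      then have [measurable]: "v k \<in> borel_measurable M" using meas_v by auto
      show "(\<lambda>\<omega>. ennreal (exp (tv * (v k \<omega>)\<^sup>2))) \<in> borel_measurable M" by measurable
    qed
    define Ev where "Ev = {\<omega> \<in> space M. hartigan_dist d (x \<omega>) i (C j) \<le> hartigan_dist d (x \<omega>) i (C jb)}"
    have Ev_eq: "Ev = {\<omega> \<in> space M. A * (\<Sum>k<d. (u k \<omega>)\<^sup>2) \<le> B * (\<Sum>k<d. (v k \<omega>)\<^sup>2)}"
      unfolding Ev_def hj hb ..
    have Ev_sets: "Ev \<in> sets M" unfolding Ev_eq using mU mV by measurable
    define E1 where "E1 = e1 ^ d"
    define E2 where "E2 = e2 ^ d"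
    have E1p: "0 < E1" "0 < E2" unfolding E1_def E2_def using e1p e2p by simp_all
    define lam where "lam = sqrt (E2 / E1)"
    have lam0: "0 < lam" unfolding lam_def using E1p by simp
    have pw: "indicator Ev \<omega> \<le> ennreal (lam / 2) * (\<Prod>k<d. ennreal (exp (tu * (u k \<omega>)\<^sup>2)))
        + ennreal (1 / (2 * lam)) * (\<Prod>k<d. ennreal (exp (tv * (v k \<omega>)\<^sup>2)))" for \<omega>
    proof -
      define U where "U = (\<Sum>k<d. (u k \<omega>)\<^sup>2)"
      define V where "V = (\<Sum>k<d. (v k \<omega>)\<^sup>2)"
      have pu: "(\<Prod>k<d. ennreal (exp (tu * (u k \<omega>)\<^sup>2))) = ennreal (exp (tu * U))"
        unfolding U_def sum_distrib_left by (simp add: prod_ennreal exp_sum)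
      have pv: "(\<Prod>k<d. ennreal (exp (tv * (v k \<omega>)\<^sup>2))) = ennreal (exp (tv * V))"
        unfolding V_def sum_distrib_left by (simp add: prod_ennreal exp_sum)
      have F: "ennreal (lam / 2) * ennreal (exp (tu * U)) + ennreal (1 / (2 * lam)) * ennreal (exp (tv * V))
          = ennreal (lam / 2 * exp (tu * U) + 1 / (2 * lam) * exp (tv * V))"
      proof -
        have 1: "ennreal (lam / 2) * ennreal (exp (tu * U)) = ennreal (lam / 2 * exp (tu * U))"
          by (rule ennreal_mult[symmetric]) (use lam0 in auto)
        have 2: "ennreal (1 / (2 * lam)) * ennreal (exp (tv * V)) = ennreal (1 / (2 * lam) * exp (tv * V))"
          by (rule ennreal_mult[symmetric]) (use lam0 in auto)
        show ?thesis unfolding 1 2 by (rule ennreal_plus[symmetric]) (use lam0 in auto)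
      qed
      show ?thesis
      proof (cases "\<omega> \<in> Ev")
        case False then show ?thesis by simp
      next
        case True
        then have le: "A * U \<le> B * V" unfolding Ev_eq U_def V_def by simp
        have "1 \<le> exp (s * (B * V - A * U))" using le s0 by simp
        also have "\<dots> = exp (- s * A * U) * exp (s * B * V)"
          by (subst exp_add[symmetric]) (simp add: algebra_simps)
        also have "\<dots> \<le> lam / 2 * (exp (- s * A * U))\<^sup>2 + 1 / (2 * lam) * (exp (s * B * V))\<^sup>2"
          by (rule amgm_aux[OF lam0])
        also have "\<dots> = lam / 2 * exp (tu * U) + 1 / (2 * lam) * exp (tv * V)"
          unfolding tu_def tv_def power2_eq_square mult_exp_exp by (simp add: algebra_simps)
        finally have "1 \<le> lam / 2 * exp (tu * U) + 1 / (2 * lam) * exp (tv * V)" .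
        then show ?thesis using True unfolding pu pv F by simp
      qed
    qed
    have "emeasure M Ev \<le> (\<integral>\<^sup>+\<omega>. ennreal (lam / 2) * (\<Prod>k<d. ennreal (exp (tu * (u k \<omega>)\<^sup>2)))
        + ennreal (1 / (2 * lam)) * (\<Prod>k<d. ennreal (exp (tv * (v k \<omega>)\<^sup>2))) \<partial>M)"
      unfolding nn_integral_indicator[OF Ev_sets, symmetric] by (rule nn_integral_mono) (rule pw)
    also have "\<dots> = ennreal (lam / 2) * ennreal E1 + ennreal (1 / (2 * lam)) * ennreal E2"
      using mPu mPv by (simp add: nn_integral_add nn_integral_cmult Eu Evv E1_def E2_def)
    also have "\<dots> = ennreal (lam / 2 * E1 + 1 / (2 * lam) * E2)"
    proof -
      have 1: "ennreal (lam / 2) * ennreal E1 = ennreal (lam / 2 * E1)"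
        by (rule ennreal_mult[symmetric]) (use lam0 E1p in auto)
      have 2: "ennreal (1 / (2 * lam)) * ennreal E2 = ennreal (1 / (2 * lam) * E2)"
        by (rule ennreal_mult[symmetric]) (use lam0 E1p in auto)
      show ?thesis unfolding 1 2 by (rule ennreal_plus[symmetric]) (use lam0 E1p in auto)
    qed
    also have "lam / 2 * E1 + 1 / (2 * lam) * E2 = sqrt (E1 * E2)"
    proof -
      have a1: "lam * E1 = sqrt (E1 * E2)"
      proof -
        have "lam * E1 = sqrt (E2 / E1) * sqrt (E1\<^sup>2)" unfolding lam_def using E1p by simp
        also have "\<dots> = sqrt (E1 * E2)" unfolding real_sqrt_mult[symmetric] using E1p
          by (simp add: power2_eq_square)
        finally show ?thesis .
      qed
      have a2: "E2 / lam = sqrt (E1 * E2)"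
      proof -
        have "E2 / lam = sqrt (E2\<^sup>2) / sqrt (E2 / E1)" unfolding lam_def using E1p by simp
        also have "\<dots> = sqrt (E1 * E2)" unfolding real_sqrt_divide[symmetric] using E1p
          by (simp add: power2_eq_square field_simps)
        finally show ?thesis .
      qed
      have "lam / 2 * E1 + 1 / (2 * lam) * E2 = (lam * E1) / 2 + (E2 / lam) / 2"
        using lam0 by (simp add: field_simps)
      then show ?thesis unfolding a1 a2 by simp
    qed
    also have "sqrt (E1 * E2) = \<rho> powr (real d / 4)"
    proof -
      have "(1 + 4 * s * P) * (1 - 4 * s * R) = 1 / \<rho>"
        unfolding sP sR rho_eq using P0 R0 by (simp add: field_simps power2_eq_square)
      then have "e1 * e2 = sqrt \<rho>"
        unfolding e1_def e2_def using rho_pos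
        by (simp add: real_sqrt_mult[symmetric] real_sqrt_divide)
      then have "E1 * E2 = (\<rho> powr (1/2)) ^ d"
        unfolding E1_def E2_def using rho_pos by (simp add: power_mult_distrib[symmetric] powr_half_sqrt)
      also have "\<dots> = \<rho> powr (real d * (1/2))" using rho_pos by (simp add: powr_power)
      finally have "sqrt (E1 * E2) = (\<rho> powr (real d * (1/2))) powr (1/2)"
        by (simp add: powr_half_sqrt)
      also have "\<dots> = \<rho> powr (real d / 4)" by (simp add: powr_powr)
      finally show ?thesis .
    qed
    finally have "emeasure M Ev \<le> ennreal (\<rho> powr (real d / 4))" .
    then show ?thesis unfolding Ev_def[symmetric] using emeasure_eq_measure
      by (simp add: emeasure_eq_measure)
  qed
  show ?thesis
    using main rho_pos rho_lt
    unfolding Let_def S_def[symmetric] jb_def[symmetric] Rj_def[symmetric] Rjb_def[symmetric]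
      a_def[symmetric] b_def[symmetric] \<rho>_def[symmetric] x_def[symmetric]
    by simp
qed

end
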